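(* Let $a>0$, let $v:\mathbb{R}\to[v_0,\infty)$ be continuously differentiable with $v_0>0$, fix $r>a/v_0$, let $C=C([-r,0],\mathbb{R})$ with the maximum norm and $C^1=C^1([-r,0],\mathbb{R})$ with the norm $|\phi|_1=\max|\phi|+\max|\phi'|$. Let $\delta:C\to(0,r)$ be the map assigning to $\phi\in C$ the unique $u\in(0,r)$ with $a=\int_{-u}^0 v(\phi(s))\,ds$; it is continuously differentiable with derivative $D\delta(\phi)\chi=-\int_{-\delta(\phi)}^0 v'(\phi(s))\chi(s)\,ds\,/\,v(\phi(-\delta(\phi)))$. For $\phi\in C^1$ and $\chi\in C$ define $$D_eE(\phi)\chi=\chi(-\delta(\phi))-\phi'(-\delta(\phi))\,D\delta(\phi)\chi .$$ Then the map $C^1\times C\ni(\phi,\chi)\mapsto D_eE(\phi)\chi\in\mathbb{R}$ is continuous.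
   Context: $D_eE(\phi):C\to\mathbb{R}$ is the linear extension to $C$ of the derivative of the continuously differentiable map $E:C^1\to\mathbb{R}$, $E(\phi)=\phi(-\delta(\phi))$. *)

theory Defs
  imports "HOL-Analysis.Analysis"
begin

text \<open>Elements of C([-r,0],R) and C^1([-r,0],R) are represented as functions
  real => real; only their values on [-r,0] matter.\<close>

definition inC :: "real \<Rightarrow> (real \<Rightarrow> real) \<Rightarrow> bool" where
  "inC r \<phi> \<longleftrightarrow> continuous_on {-r..0} \<phi>"

definition dC1 :: "real \<Rightarrow> (real \<Rightarrow> real) \<Rightarrow> real \<Rightarrow> real" where
  "dC1 r \<phi> s = vector_derivative \<phi> (at s within {-r..0})"

definition inC1 :: "real \<Rightarrow> (real \<Rightarrow> real) \<Rightarrow> bool" where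
  "inC1 r \<phi> \<longleftrightarrow> continuous_on {-r..0} \<phi>
     \<and> (\<forall>s\<in>{-r..0}. \<phi> differentiable (at s within {-r..0}))
     \<and> continuous_on {-r..0} (dC1 r \<phi>)"

definition supnorm :: "real \<Rightarrow> (real \<Rightarrow> real) \<Rightarrow> real" where
  "supnorm r \<phi> = (SUP s\<in>{-r..0}. \<bar>\<phi> s\<bar>)"

definition norm1 :: "real \<Rightarrow> (real \<Rightarrow> real) \<Rightarrow> real" where
  "norm1 r \<phi> = supnorm r \<phi> + supnorm r (dC1 r \<phi>)"

definition delay :: "real \<Rightarrow> real \<Rightarrow> (real \<Rightarrow> real) \<Rightarrow> (real \<Rightarrow> real) \<Rightarrow> real" where
  "delay a r v \<phi> = (THE u. u \<in> {0<..<r} \<and> a = integral {-u..0} (\<lambda>s. v (\<phi> s)))"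

definition Ddelay :: "real \<Rightarrow> real \<Rightarrow> (real \<Rightarrow> real) \<Rightarrow> (real \<Rightarrow> real)
     \<Rightarrow> (real \<Rightarrow> real) \<Rightarrow> (real \<Rightarrow> real) \<Rightarrow> real" where
  "Ddelay a r v v' \<phi> \<xi> =
     - integral {-(delay a r v \<phi>)..0} (\<lambda>s. v' (\<phi> s) * \<xi> s) / v (\<phi> (- delay a r v \<phi>))"

definition DeE :: "real \<Rightarrow> real \<Rightarrow> (real \<Rightarrow> real) \<Rightarrow> (real \<Rightarrow> real)
     \<Rightarrow> (real \<Rightarrow> real) \<Rightarrow> (real \<Rightarrow> real) \<Rightarrow> real" where
  "DeE a r v v' \<phi> \<xi> =
     \<xi> (- delay a r v \<phi>) - dC1 r \<phi> (- delay a r v \<phi>) * Ddelay a r v v' \<phi> \<xi>"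

end

theory Submission
  imports Defs
begin


definition unif :: "real \<Rightarrow> 'x filter \<Rightarrow> ('x \<Rightarrow> real \<Rightarrow> real) \<Rightarrow> (real \<Rightarrow> real) \<Rightarrow> bool" where
  "unif r F G g \<longleftrightarrow> (\<forall>e>0. eventually (\<lambda>x. \<forall>s\<in>{-r..0}. \<bar>G x s - g s\<bar> < e) F)"

lemma cont_bound:
  assumes "continuous_on {-r..0} (h::real\<Rightarrow>real)"
  obtains B where "B > 0" "\<And>s. s \<in> {-r..0} \<Longrightarrow> \<bar>h s\<bar> \<le> B"
proof -
  have "compact (h ` {-r..0})" using assms compact_continuous_image by blast
  then obtain B where "B > 0" "\<forall>y\<in>h ` {-r..0}. norm y \<le> B"
    using compact_imp_bounded bounded_pos by metis
  then show ?thesis using that by auto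
qed

lemma sup_bound:
  assumes "inC r h" "s \<in> {-r..0}"
  shows "\<bar>h s\<bar> \<le> supnorm r h"
proof -
  obtain B where "\<And>s. s \<in> {-r..0} \<Longrightarrow> \<bar>h s\<bar> \<le> B"
    using cont_bound assms(1) unfolding inC_def by blast
  then have "bdd_above ((\<lambda>s. \<bar>h s\<bar>) ` {-r..0})" by (intro bdd_aboveI[where M=B]) auto
  then show ?thesis unfolding supnorm_def using assms(2) by (rule cSUP_upper2) simp
qed

lemma supnorm_nonneg:
  assumes "inC r h" "r \<ge> 0"
  shows "supnorm r h \<ge> 0"
  using sup_bound[OF assms(1), of 0] assms(2) by force

lemma dC1_works:
  assumes "inC1 r \<psi>" "s \<in> {-r..0}"
  shows "(\<psi> has_vector_derivative dC1 r \<psi> s) (at s within {-r..0})"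
  using assms unfolding inC1_def dC1_def using vector_derivative_works by blast

lemma dC1_diff:
  assumes "inC1 r \<psi>" "inC1 r \<phi>" "r > 0" "s \<in> {-r..0}"
  shows "dC1 r (\<lambda>s. \<psi> s - \<phi> s) s = dC1 r \<psi> s - dC1 r \<phi> s"
proof -
  have "((\<lambda>s. \<psi> s - \<phi> s) has_vector_derivative dC1 r \<psi> s - dC1 r \<phi> s) (at s within {-r..0})"
    using dC1_works[OF assms(1,4)] dC1_works[OF assms(2,4)] by (rule has_vector_derivative_diff)
  then show ?thesis unfolding dC1_def
    using vector_derivative_within_closed_interval[of "-r" 0 s] assms(3,4) by auto
qed

lemma unif_eval:
  assumes U: "unif r F G g" and g: "continuous_on {-r..0} g"
    and T: "(T \<longlongrightarrow> t) F" and Tin: "eventually (\<lambda>x. T x \<in> {-r..0}) F" and t: "t \<in> {-r..0}"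
  shows "((\<lambda>x. G x (T x)) \<longlongrightarrow> g t) F"
proof -
  have 1: "((\<lambda>x. g (T x)) \<longlongrightarrow> g t) F"
    using continuous_on_tendsto_compose[OF g T t Tin] .
  have 2: "((\<lambda>x. G x (T x) - g (T x)) \<longlongrightarrow> 0) F"
  proof (rule tendstoI)
    fix e :: real assume "e > 0"
    then have "eventually (\<lambda>x. \<forall>s\<in>{-r..0}. \<bar>G x s - g s\<bar> < e) F" using U unfolding unif_def by blast
    then show "eventually (\<lambda>x. dist (G x (T x) - g (T x)) 0 < e) F"
      using Tin by eventually_elim auto
  qed
  show ?thesis using tendsto_add[OF 2 1] by simp
qed

lemma unif_comp:
  assumes U: "unif r F G g" and g: "continuous_on {-r..0} g" and h: "continuous_on UNIV h"
  shows "unif r F (\<lambda>x s. h (G x s)) (\<lambda>s. h (g s))"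
  unfolding unif_def
proof (intro allI impI)
  fix e :: real assume e: "e > 0"
  obtain B where B: "B > 0" "\<And>s. s \<in> {-r..0} \<Longrightarrow> \<bar>g s\<bar> \<le> B" using cont_bound[OF g] by blast
  have "uniformly_continuous_on {-(B+1)..B+1} h"
    by (rule compact_uniformly_continuous) (auto intro: continuous_on_subset[OF h])
  then obtain d where d: "d > 0" "\<And>x y. x \<in> {-(B+1)..B+1} \<Longrightarrow> y \<in> {-(B+1)..B+1} \<Longrightarrow> dist y x < d \<Longrightarrow> dist (h y) (h x) < e"
    unfolding uniformly_continuous_on_def using e by metis
  have "eventually (\<lambda>x. \<forall>s\<in>{-r..0}. \<bar>G x s - g s\<bar> < min d 1) F"
    using U d(1) unfolding unif_def by (meson min_less_iff_conj zero_less_one)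
  then show "eventually (\<lambda>x. \<forall>s\<in>{-r..0}. \<bar>h (G x s) - h (g s)\<bar> < e) F"
  proof eventually_elim
    case (elim x)
    show ?case
    proof
      fix s assume s: "s \<in> {-r..0}"
      have "\<bar>g s\<bar> \<le> B" using B(2)[OF s] .
      moreover have "\<bar>G x s - g s\<bar> < min d 1" using elim s by blast
      ultimately have "g s \<in> {-(B+1)..B+1}" "G x s \<in> {-(B+1)..B+1}" "dist (G x s) (g s) < d"
        by (auto simp: abs_le_iff abs_less_iff dist_real_def)
      then show "\<bar>h (G x s) - h (g s)\<bar> < e"
        using d(2)[of "g s" "G x s"] by (auto simp: dist_real_def)
    qed
  qed
qed

lemma unif_mult:
  assumes U: "unif r F G g" and V: "unif r F H h"
    and g: "continuous_on {-r..0} g" and h: "continuous_on {-r..0} h"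
  shows "unif r F (\<lambda>x s. G x s * H x s) (\<lambda>s. g s * h s)"
  unfolding unif_def
proof (intro allI impI)
  fix e :: real assume e: "e > 0"
  obtain Bg where Bg: "Bg > 0" "\<And>s. s \<in> {-r..0} \<Longrightarrow> \<bar>g s\<bar> \<le> Bg" using cont_bound[OF g] by blast
  obtain Bh where Bh: "Bh > 0" "\<And>s. s \<in> {-r..0} \<Longrightarrow> \<bar>h s\<bar> \<le> Bh" using cont_bound[OF h] by blast
  define e1 where "e1 = e / (Bg + Bh + 1)"
  have e1: "e1 > 0" using e Bg Bh by (simp add: e1_def)
  have "eventually (\<lambda>x. \<forall>s\<in>{-r..0}. \<bar>G x s - g s\<bar> < e1) F" using U e1 unfolding unif_def by simp
  moreover have "eventually (\<lambda>x. \<forall>s\<in>{-r..0}. \<bar>H x s - h s\<bar> < min e1 1) F"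
    using V e1 unfolding unif_def by (meson min_less_iff_conj zero_less_one)
  ultimately show "eventually (\<lambda>x. \<forall>s\<in>{-r..0}. \<bar>G x s * H x s - g s * h s\<bar> < e) F"
  proof eventually_elim
    case (elim x)
    show ?case
    proof
      fix s assume s: "s \<in> {-r..0}"
      have a: "\<bar>G x s - g s\<bar> < e1" and b: "\<bar>H x s - h s\<bar> < min e1 1" using elim s by auto
      have hb: "\<bar>H x s\<bar> \<le> Bh + 1" using b Bh(2)[OF s] by linarith
      have "G x s * H x s - g s * h s = (G x s - g s) * H x s + g s * (H x s - h s)" by (simp add: algebra_simps)
      then have "\<bar>G x s * H x s - g s * h s\<bar> \<le> \<bar>G x s - g s\<bar> * \<bar>H x s\<bar> + \<bar>g s\<bar> * \<bar>H x s - h s\<bar>"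
        by (simp add: abs_mult[symmetric] abs_triangle_ineq)
      moreover have "e1 * (Bh + 1) + Bg * e1 = e"
      proof -
        have "e1 * (Bg + Bh + 1) = e" using Bg Bh by (simp add: e1_def)
        then show ?thesis by (simp add: algebra_simps)
      qed
      moreover have "\<bar>G x s - g s\<bar> * \<bar>H x s\<bar> + \<bar>g s\<bar> * \<bar>H x s - h s\<bar> < e1 * (Bh + 1) + Bg * e1"
      proof -
        have "\<bar>G x s - g s\<bar> * \<bar>H x s\<bar> \<le> \<bar>G x s - g s\<bar> * (Bh + 1)" using hb by (simp add: mult_left_mono)
        also have "\<dots> < e1 * (Bh + 1)" using a Bh by (intro mult_strict_right_mono) auto
        finally have "\<bar>G x s - g s\<bar> * \<bar>H x s\<bar> < e1 * (Bh + 1)" .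
        moreover have "\<bar>g s\<bar> * \<bar>H x s - h s\<bar> \<le> Bg * e1" using b Bg(2)[OF s] by (intro mult_mono) auto
        ultimately show ?thesis by linarith
      qed
      then show "\<bar>G x s * H x s - g s * h s\<bar> < e"
        using calculation by linarith
    qed
  qed
qed



lemma int_cont_int:
  assumes "continuous_on {-r..0} (f::real\<Rightarrow>real)" "0 \<le> u" "u \<le> r"
  shows "f integrable_on {-u..0}"
  by (rule integrable_continuous_real) (rule continuous_on_subset[OF assms(1)], use assms in auto)

lemma int_close:
  assumes f: "continuous_on {-r..0} (f::real\<Rightarrow>real)" and g: "continuous_on {-r..0} g"
    and u: "0 \<le> u" "u \<le> r" and c: "\<And>s. s \<in> {-r..0} \<Longrightarrow> \<bar>f s - g s\<bar> \<le> c"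
  shows "\<bar>integral {-u..0} f - integral {-u..0} g\<bar> \<le> c * u"
proof -
  have "integral {-u..0} f - integral {-u..0} g = integral {-u..0} (\<lambda>s. f s - g s)"
    using int_cont_int[OF f u] int_cont_int[OF g u] by (simp add: integral_diff)
  also have "norm \<dots> \<le> c * (0 - -u)"
    by (rule integral_bound) (use u in \<open>auto intro!: continuous_on_diff continuous_on_subset[OF f] continuous_on_subset[OF g] c\<close>)
  finally show ?thesis by simp
qed

lemma I_mono:
  assumes w: "continuous_on {-r..0} (w::real\<Rightarrow>real)" and ge: "\<And>s. s \<in> {-r..0} \<Longrightarrow> w s \<ge> v0"
    and u: "0 \<le> u" "u \<le> u'" "u' \<le> r"
  shows "integral {-u..0} w + v0 * (u' - u) \<le> integral {-u'..0} w"
proof -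
  have int: "w integrable_on {-u'..0}" using int_cont_int[OF w] u by simp
  have "integral {-u'..-u} w + integral {-u..0} w = integral {-u'..0} w"
    using Henstock_Kurzweil_Integration.integral_combine[OF _ _ int, of "-u"] u by simp
  moreover have "integral {-u'..-u} (\<lambda>_. v0) \<le> integral {-u'..-u} w"
    by (rule integral_le) (use u ge integrable_on_subinterval[OF int] in auto)
  moreover have "integral {-u'..-u} (\<lambda>_. v0) = v0 * (u' - u)" using u by simp
  ultimately show ?thesis by linarith
qed

lemma I_cont:
  assumes w: "continuous_on {-r..0} (w::real\<Rightarrow>real)"
  shows "continuous_on {0..r} (\<lambda>u. integral {-u..0} w)"
proof -
  have "continuous_on {-r..0} (\<lambda>x. integral {x..0} w)"
    by (rule indefinite_integral_continuous_1') (rule integrable_continuous_real[OF w])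
  then show ?thesis
    by (rule continuous_on_compose2[where f="\<lambda>u. -u"]) (auto intro: continuous_intros)
qed

context
  fixes a r v0 :: real and v :: "real \<Rightarrow> real"
  assumes a_pos: "a > 0" and v0_pos: "v0 > 0" and v_ge: "\<And>x. v x \<ge> v0"
    and v_cont: "continuous_on UNIV v" and r_gt: "r > a / v0"
begin

lemma r_pos: "r > 0"
  using r_gt a_pos v0_pos by (smt (verit) divide_pos_pos)

lemma vr: "v0 * r > a"
  using r_gt v0_pos by (simp add: field_simps)

lemma vphi_cont: "inC r \<phi> \<Longrightarrow> continuous_on {-r..0} (\<lambda>s. v (\<phi> s))"
  unfolding inC_def by (rule continuous_on_compose2[OF v_cont]) auto

lemma delay_char:
  assumes "inC r \<phi>"
  shows "delay a r v \<phi> \<in> {0<..<r} \<and> a = integral {-delay a r v \<phi>..0} (\<lambda>s. v (\<phi> s))"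
proof -
  let ?W = "\<lambda>s. v (\<phi> s)"
  let ?I = "\<lambda>u. integral {-u..0} ?W"
  have W: "continuous_on {-r..0} ?W" using vphi_cont[OF assms] .
  have I0: "?I 0 = 0" by simp
  have Ir: "?I r \<ge> v0 * r" using I_mono[OF W, of v0 0 r] v_ge r_pos by simp
  obtain u where u: "0 \<le> u" "u \<le> r" "?I u = a"
    using IVT'[of ?I 0 a r] I_cont[OF W] I0 Ir vr a_pos r_pos by auto
  have u2: "u \<in> {0<..<r}" using u I0 Ir vr a_pos by (cases "u = 0"; cases "u = r") auto
  have ex: "\<exists>!u. u \<in> {0<..<r} \<and> a = ?I u"
  proof (rule ex1I[of _ u])
    show "u \<in> {0<..<r} \<and> a = ?I u" using u u2 by simp
    fix u' assume u': "u' \<in> {0<..<r} \<and> a = ?I u'"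
    show "u' = u"
    proof (rule ccontr)
      assume "u' \<noteq> u"
      then consider "u' < u" | "u < u'" by linarith
      then show False
      proof cases
        case 1
        then have "?I u' + v0 * (u - u') \<le> ?I u" using I_mono[OF W, of v0 u' u] v_ge u u' by simp
        then show False using u u' 1 v0_pos by (smt (verit) mult_pos_pos)
      next
        case 2
        then have "?I u + v0 * (u' - u) \<le> ?I u'" using I_mono[OF W, of v0 u u'] v_ge u u' by simp
        then show False using u u' 2 v0_pos by (smt (verit) mult_pos_pos)
      qed
    qed
  qed
  show ?thesis unfolding delay_def by (rule theI'[OF ex])
qed

lemma delay_cont:
  assumes phi: "inC r \<phi>" and ev: "eventually (\<lambda>x. inC r (\<Psi> x)) F"
    and U: "unif r F (\<lambda>x s. v (\<Psi> x s)) (\<lambda>s. v (\<phi> s))"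
  shows "((\<lambda>x. delay a r v (\<Psi> x)) \<longlongrightarrow> delay a r v \<phi>) F"
proof (rule tendstoI)
  fix e :: real assume e: "e > 0"
  define c where "c = v0 * e / (2 * r)"
  have c: "c > 0" using e v0_pos r_pos by (simp add: c_def)
  have cr: "c * r = v0 * e / 2" using r_pos by (simp add: c_def)
  have "eventually (\<lambda>x. \<forall>s\<in>{-r..0}. \<bar>v (\<Psi> x s) - v (\<phi> s)\<bar> < c) F" using U c unfolding unif_def by blast
  with ev show "eventually (\<lambda>x. dist (delay a r v (\<Psi> x)) (delay a r v \<phi>) < e) F"
  proof eventually_elim
    case (elim x)
    define d where "d = delay a r v \<phi>"
    define D where "D = delay a r v (\<Psi> x)"
    let ?Wp = "\<lambda>s. v (\<phi> s)"
    let ?Wq = "\<lambda>s. v (\<Psi> x s)"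
    have Wp: "continuous_on {-r..0} ?Wp" using vphi_cont[OF phi] .
    have Wq: "continuous_on {-r..0} ?Wq" using vphi_cont elim by blast
    have d: "d \<in> {0<..<r}" "a = integral {-d..0} ?Wp" using delay_char[OF phi] unfolding d_def by auto
    have D: "D \<in> {0<..<r}" "a = integral {-D..0} ?Wq" using delay_char elim unfolding D_def by auto
    have close: "\<bar>integral {-u..0} ?Wq - integral {-u..0} ?Wp\<bar> \<le> v0 * e / 2" if "0 \<le> u" "u \<le> r" for u
    proof -
      have "\<bar>integral {-u..0} ?Wq - integral {-u..0} ?Wp\<bar> \<le> c * u"
        by (rule int_close[OF Wq Wp that]) (use elim in \<open>auto intro: less_imp_le\<close>)
      also have "\<dots> \<le> c * r" using c that by (simp add: mult_left_mono)
      finally show ?thesis using cr by simp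
    qed
    have "\<bar>D - d\<bar> < e"
    proof (rule ccontr)
      assume "\<not> \<bar>D - d\<bar> < e"
      then consider "D \<ge> d + e" | "D \<le> d - e" by linarith
      then show False
      proof cases
        case 1
        have a1: "integral {-(d+e)..0} ?Wq + v0 * (D - (d+e)) \<le> integral {-D..0} ?Wq"
          using I_mono[OF Wq, of v0 "d+e" D] v_ge d D 1 e by simp
        have a2: "integral {-d..0} ?Wp + v0 * ((d+e) - d) \<le> integral {-(d+e)..0} ?Wp"
          using I_mono[OF Wp, of v0 d "d+e"] v_ge d D 1 e by simp
        have a3: "\<bar>integral {-(d+e)..0} ?Wq - integral {-(d+e)..0} ?Wp\<bar> \<le> v0 * e / 2"
          using close[of "d+e"] d D 1 e by simp
        have "v0 * (D - (d+e)) \<ge> 0" using 1 v0_pos by simp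
        moreover have "v0 * e > 0" using v0_pos e by simp
        ultimately show False using a1 a2 a3 d D by (simp add: abs_le_iff)
      next
        case 2
        have a1: "integral {-D..0} ?Wq + v0 * ((d-e) - D) \<le> integral {-(d-e)..0} ?Wq"
          using I_mono[OF Wq, of v0 D "d-e"] v_ge d D 2 e by simp
        have a2: "integral {-(d-e)..0} ?Wp + v0 * (d - (d-e)) \<le> integral {-d..0} ?Wp"
          using I_mono[OF Wp, of v0 "d-e" d] v_ge d D 2 e by simp
        have a3: "\<bar>integral {-(d-e)..0} ?Wq - integral {-(d-e)..0} ?Wp\<bar> \<le> v0 * e / 2"
          using close[of "d-e"] d D 2 e by simp
        have "v0 * ((d-e) - D) \<ge> 0" using 2 v0_pos by simp
        moreover have "v0 * e > 0" using v0_pos e by simp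
        ultimately show False using a1 a2 a3 d D by (simp add: abs_le_iff)
      qed
    qed
    then show ?case by (simp add: dist_real_def D_def d_def)
  qed
qed

end

lemma int_tendsto:
  assumes U: "unif r F G g" and g: "continuous_on {-r..0} g"
    and Gc: "eventually (\<lambda>x. continuous_on {-r..0} (G x)) F"
    and T: "(T \<longlongrightarrow> u) F" and Tin: "eventually (\<lambda>x. T x \<in> {0..r}) F" and u: "u \<in> {0..r}"
  shows "((\<lambda>x. integral {-T x..0} (G x)) \<longlongrightarrow> integral {-u..0} g) F"
proof -
  have r: "r \<ge> 0" using u by simp
  have 1: "((\<lambda>x. integral {-T x..0} g) \<longlongrightarrow> integral {-u..0} g) F"
    using continuous_on_tendsto_compose[OF I_cont[OF g] T u Tin] .
  have 2: "((\<lambda>x. integral {-T x..0} (G x) - integral {-T x..0} g) \<longlongrightarrow> 0) F"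
  proof (rule tendstoI)
    fix e :: real assume e: "e > 0"
    define c where "c = e / (r + 1)"
    have c: "c > 0" using e r by (simp add: c_def)
    have cr: "c * r < e" using e r by (simp add: c_def field_simps)
    have "eventually (\<lambda>x. \<forall>s\<in>{-r..0}. \<bar>G x s - g s\<bar> < c) F" using U c unfolding unif_def by blast
    with Gc Tin show "eventually (\<lambda>x. dist (integral {-T x..0} (G x) - integral {-T x..0} g) 0 < e) F"
    proof eventually_elim
      case (elim x)
      have "\<bar>integral {-T x..0} (G x) - integral {-T x..0} g\<bar> \<le> c * T x"
        by (rule int_close) (use elim g in \<open>auto intro: less_imp_le\<close>)
      also have "\<dots> \<le> c * r" using c elim by (simp add: mult_left_mono)
      finally show ?case using cr by simp
    qed
  qed
  show ?thesis using tendsto_add[OF 2 1] by simp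
qed



lemma C1_diff_facts:
  assumes q: "inC1 r \<psi>" and p: "inC1 r \<phi>" and r: "r > 0" and s: "s \<in> {-r..0}"
  shows "\<bar>\<psi> s - \<phi> s\<bar> \<le> norm1 r (\<lambda>s. \<psi> s - \<phi> s)"
    and "\<bar>dC1 r \<psi> s - dC1 r \<phi> s\<bar> \<le> norm1 r (\<lambda>s. \<psi> s - \<phi> s)"
proof -
  have c1: "inC r (\<lambda>s. \<psi> s - \<phi> s)" using q p unfolding inC1_def inC_def by (auto intro: continuous_on_diff)
  have "continuous_on {-r..0} (\<lambda>s. dC1 r \<psi> s - dC1 r \<phi> s)" using q p unfolding inC1_def by (auto intro: continuous_on_diff)
  then have c2: "inC r (dC1 r (\<lambda>s. \<psi> s - \<phi> s))" unfolding inC_def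
    by (rule continuous_on_eq) (simp add: dC1_diff[OF q p r])
  have n1: "supnorm r (\<lambda>s. \<psi> s - \<phi> s) \<ge> 0" using supnorm_nonneg[OF c1] r by simp
  have n2: "supnorm r (dC1 r (\<lambda>s. \<psi> s - \<phi> s)) \<ge> 0" using supnorm_nonneg[OF c2] r by simp
  show "\<bar>\<psi> s - \<phi> s\<bar> \<le> norm1 r (\<lambda>s. \<psi> s - \<phi> s)"
    using sup_bound[OF c1 s] n2 unfolding norm1_def by simp
  show "\<bar>dC1 r \<psi> s - dC1 r \<phi> s\<bar> \<le> norm1 r (\<lambda>s. \<psi> s - \<phi> s)"
    using sup_bound[OF c2 s] n1 dC1_diff[OF q p r s] unfolding norm1_def by simp
qed

theorem proposition2p2:
  fixes a r v0 :: real and v v' :: "real \<Rightarrow> real"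
  assumes a_pos: "a > 0"
    and v0_pos: "v0 > 0"
    and v_ge: "\<And>x. v x \<ge> v0"
    and v_deriv: "\<And>x. (v has_real_derivative v' x) (at x)"
    and v'_cont: "continuous_on UNIV v'"
    and r_gt: "r > a / v0"
  shows "\<forall>\<phi> \<xi>. inC1 r \<phi> \<and> inC r \<xi> \<longrightarrow>
           (\<forall>\<epsilon>>0. \<exists>\<eta>>0. \<forall>\<psi> \<omega>. inC1 r \<psi> \<and> inC r \<omega>
               \<and> norm1 r (\<lambda>s. \<psi> s - \<phi> s) < \<eta> \<and> supnorm r (\<lambda>s. \<omega> s - \<xi> s) < \<eta>
               \<longrightarrow> \<bar>DeE a r v v' \<psi> \<omega> - DeE a r v v' \<phi> \<xi>\<bar> < \<epsilon>)"
proof (intro allI impI)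
  fix \<phi> \<xi> :: "real \<Rightarrow> real"
  assume "inC1 r \<phi> \<and> inC r \<xi>"
  then have phi: "inC1 r \<phi>" and xi: "inC r \<xi>" by auto
  have v_cont: "continuous_on UNIV v"
    by (rule continuous_at_imp_continuous_on) (auto intro: DERIV_isCont[OF v_deriv])
  have r: "r > 0" using r_pos[OF a_pos v0_pos v_ge v_cont r_gt] .
  note dchar = delay_char[OF a_pos v0_pos v_ge v_cont r_gt]
  note dcont = delay_cont[OF a_pos v0_pos v_ge v_cont r_gt]
  have phiC: "inC r \<phi>" and phic: "continuous_on {-r..0} \<phi>" and dphic: "continuous_on {-r..0} (dC1 r \<phi>)"
    using phi unfolding inC1_def inC_def by auto
  have xic: "continuous_on {-r..0} \<xi>" using xi unfolding inC_def .
  define S where "S \<eta> = {p. inC1 r (fst p) \<and> inC r (snd p) \<and> norm1 r (\<lambda>s. fst p s - \<phi> s) < \<eta>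
      \<and> supnorm r (\<lambda>s. snd p s - \<xi> s) < \<eta>}" for \<eta>
  define F where "F = (INF \<eta>\<in>{0<..}. principal (S \<eta>))"
  have evF: "eventually P F \<longleftrightarrow> (\<exists>\<eta>>0. \<forall>p\<in>S \<eta>. P p)" for P
    unfolding F_def
  proof (subst eventually_INF_base)
    show "{0<..} \<noteq> ({}::real set)" by auto
    fix x y :: real assume "x \<in> {0<..}" "y \<in> {0<..}"
    then show "\<exists>z\<in>{0<..}. principal (S z) \<le> inf (principal (S x)) (principal (S y))"
      by (intro bexI[of _ "min x y"]) (auto simp: S_def)
  qed (auto simp: eventually_principal)
  have ev1: "eventually (\<lambda>p. inC1 r (fst p) \<and> inC r (snd p)) F"
    unfolding evF by (rule exI[of _ 1]) (auto simp: S_def)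
  have evC: "eventually (\<lambda>p. inC r (fst p)) F"
    using ev1 by eventually_elim (auto simp: inC1_def inC_def)
  have U1: "unif r F fst \<phi>" unfolding unif_def
  proof (intro allI impI)
    fix e :: real assume "e > 0"
    then show "eventually (\<lambda>p. \<forall>s\<in>{-r..0}. \<bar>fst p s - \<phi> s\<bar> < e) F"
      unfolding evF using C1_diff_facts(1)[OF _ phi r] by (intro exI[of _ e]) (fastforce simp: S_def)
  qed
  have U2: "unif r F (\<lambda>p. dC1 r (fst p)) (dC1 r \<phi>)" unfolding unif_def
  proof (intro allI impI)
    fix e :: real assume "e > 0"
    then show "eventually (\<lambda>p. \<forall>s\<in>{-r..0}. \<bar>dC1 r (fst p) s - dC1 r \<phi> s\<bar> < e) F"
      unfolding evF using C1_diff_facts(2)[OF _ phi r] by (intro exI[of _ e]) (fastforce simp: S_def)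
  qed
  have U3: "unif r F snd \<xi>" unfolding unif_def
  proof (intro allI impI)
    fix e :: real assume "e > 0"
    moreover have "\<bar>snd p s - \<xi> s\<bar> < e" if "p \<in> S e" "s \<in> {-r..0}" for p s
    proof -
      have "inC r (\<lambda>s. snd p s - \<xi> s)" using that xi unfolding S_def inC_def by (auto intro: continuous_on_diff)
      from sup_bound[OF this that(2)] show ?thesis using that(1) unfolding S_def by simp
    qed
    ultimately show "eventually (\<lambda>p. \<forall>s\<in>{-r..0}. \<bar>snd p s - \<xi> s\<bar> < e) F"
      unfolding evF by blast
  qed
  have Uv: "unif r F (\<lambda>p s. v (fst p s)) (\<lambda>s. v (\<phi> s))" by (rule unif_comp[OF U1 phic v_cont])
  have Dl: "((\<lambda>p. delay a r v (fst p)) \<longlongrightarrow> delay a r v \<phi>) F"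
    by (rule dcont[OF phiC evC Uv])
  have Tin: "eventually (\<lambda>p. - delay a r v (fst p) \<in> {-r..0}) F"
    using evC
  proof eventually_elim
    case (elim p)
    from dchar[OF elim] show ?case by simp
  qed
  have Tin': "eventually (\<lambda>p. delay a r v (fst p) \<in> {0..r}) F"
    using evC
  proof eventually_elim
    case (elim p)
    from dchar[OF elim] show ?case by simp
  qed
  have t: "- delay a r v \<phi> \<in> {-r..0}" and t': "delay a r v \<phi> \<in> {0..r}" using dchar[OF phiC] by auto
  have T: "((\<lambda>p. - delay a r v (fst p)) \<longlongrightarrow> - delay a r v \<phi>) F" using tendsto_minus[OF Dl] .
  have A: "((\<lambda>p. snd p (- delay a r v (fst p))) \<longlongrightarrow> \<xi> (- delay a r v \<phi>)) F"
    by (rule unif_eval[OF U3 xic T Tin t])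
  have B: "((\<lambda>p. dC1 r (fst p) (- delay a r v (fst p))) \<longlongrightarrow> dC1 r \<phi> (- delay a r v \<phi>)) F"
    by (rule unif_eval[OF U2 dphic T Tin t])
  have vpc: "continuous_on {-r..0} (\<lambda>s. v (\<phi> s))" by (rule continuous_on_compose2[OF v_cont phic]) auto
  have Cv: "((\<lambda>p. v (fst p (- delay a r v (fst p)))) \<longlongrightarrow> v (\<phi> (- delay a r v \<phi>))) F"
    by (rule unif_eval[OF Uv vpc T Tin t])
  have v'pc: "continuous_on {-r..0} (\<lambda>s. v' (\<phi> s))" by (rule continuous_on_compose2[OF v'_cont phic]) auto
  have Um: "unif r F (\<lambda>p s. v' (fst p s) * snd p s) (\<lambda>s. v' (\<phi> s) * \<xi> s)"
    by (rule unif_mult[OF unif_comp[OF U1 phic v'_cont] U3 v'pc xic])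
  have Gc: "eventually (\<lambda>p. continuous_on {-r..0} (\<lambda>s. v' (fst p s) * snd p s)) F"
    using ev1 by eventually_elim
      (auto simp: inC1_def inC_def intro!: continuous_on_mult continuous_on_compose2[OF v'_cont])
  have I: "((\<lambda>p. integral {- delay a r v (fst p)..0} (\<lambda>s. v' (fst p s) * snd p s))
      \<longlongrightarrow> integral {- delay a r v \<phi>..0} (\<lambda>s. v' (\<phi> s) * \<xi> s)) F"
    by (rule int_tendsto[OF Um continuous_on_mult[OF v'pc xic] Gc Dl Tin' t'])
  have nz: "v (\<phi> (- delay a r v \<phi>)) \<noteq> 0" using v_ge[of "\<phi> (- delay a r v \<phi>)"] v0_pos by linarith
  have lim: "((\<lambda>p. DeE a r v v' (fst p) (snd p)) \<longlongrightarrow> DeE a r v v' \<phi> \<xi>) F"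
    unfolding DeE_def Ddelay_def
    by (intro tendsto_diff[OF A] tendsto_mult[OF B] tendsto_divide[OF tendsto_minus[OF I] Cv nz])
  fix \<epsilon> :: real assume "\<epsilon> > 0"
  from tendstoD[OF lim this] obtain \<eta> where "\<eta> > 0"
      and h: "\<forall>p\<in>S \<eta>. dist (DeE a r v v' (fst p) (snd p)) (DeE a r v v' \<phi> \<xi>) < \<epsilon>"
    unfolding evF by blast
  show "\<exists>\<eta>>0. \<forall>\<psi> \<omega>. inC1 r \<psi> \<and> inC r \<omega>
               \<and> norm1 r (\<lambda>s. \<psi> s - \<phi> s) < \<eta> \<and> supnorm r (\<lambda>s. \<omega> s - \<xi> s) < \<eta>
               \<longrightarrow> \<bar>DeE a r v v' \<psi> \<omega> - DeE a r v v' \<phi> \<xi>\<bar> < \<epsilon>"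
  proof (intro exI[of _ \<eta>] conjI allI impI)
    show "\<eta> > 0" by fact
    fix \<psi> \<omega> assume "inC1 r \<psi> \<and> inC r \<omega> \<and> norm1 r (\<lambda>s. \<psi> s - \<phi> s) < \<eta> \<and> supnorm r (\<lambda>s. \<omega> s - \<xi> s) < \<eta>"
    then have "(\<psi>, \<omega>) \<in> S \<eta>" by (simp add: S_def)
    from h[rule_format, OF this] show "\<bar>DeE a r v v' \<psi> \<omega> - DeE a r v v' \<phi> \<xi>\<bar> < \<epsilon>"
      by (simp add: dist_real_def)
  qed
qed

end
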